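(* Let $U$ be a separable real Banach space with closed unit ball $B_U$, and let $\lambda$ be a $\sigma$-finite measure on $\mathcal B(U)$ with $\lambda(\{0\})=0$. Let $N$ be a Poisson random measure on $(0,\infty)\times U$ with intensity measure $\mathrm{Leb}\otimes\lambda$. If for all $u^\ast\in U^\ast$ the image measure $\langle\lambda,u^\ast\rangle$ is a Lévy measure on $\mathbb R$, then for all $u^\ast\in U^\ast$, $$\int_{(0,1]\times B_U}|\langle u,u^\ast\rangle|^2\,N(\mathrm ds,\mathrm du)<\infty\quad\text{almost surely.}$$
   Context: $\langle\lambda,u^\ast\rangle$ denotes the image (push-forward) of $\lambda$ under $u\mapsto\langle u,u^\ast\rangle$. A $\sigma$-finite measure $\lambda$ on the Borel sets of a separable Banach space $W$ with $\lambda(\{0\})=0$ is a Lévy measure if $w^\ast\mapsto\exp\big(\int_W(e^{i\langle w,w^\ast\rangle}-1-i\langle w,w^\ast\rangle\mathbf 1_{\{\|w\|\le1\}})\,\lambda(\mathrm dw)\big)$ is the characteristic function of a Borel probability measure on $W$ (here applied with $W=\mathbb R$). A Poisson random measure on $(0,\infty)\times U$ with intensity $\nu=\mathrm{Leb}\otimes\lambda$ is a random measure $N$ with values in $\{0,1,\dots\}\cup\{\infty\}$ such that $N(A)$ is Poisson with parameter $\nu(A)$ and $N(A_1),\dots,N(A_n)$ are independent for disjoint $A_i$. *)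

theory Defs
  imports "HOL-Probability.Probability"
begin

text \<open>Levy measure on the real line (W = R, the dual pairing being (x,t) maps to t*x):
  a sigma-finite Borel measure with no mass at 0 such that
  t maps to exp(integral of (e^{itx} - 1 - itx 1_{|x| <= 1})) is the characteristic
  function of a Borel probability measure.\<close>
definition levy_measure_real :: "real measure \<Rightarrow> bool" where
  "levy_measure_real m \<longleftrightarrow>
     sets m = sets borel \<and> sigma_finite_measure m \<and> emeasure m {0} = 0 \<and>
     (\<exists>\<mu>. prob_space \<mu> \<and> sets \<mu> = sets borel \<and>
        (\<forall>t::real.
           integrable m (\<lambda>x. iexp (t * x) - 1 - \<i> * complex_of_real (t * x) * indicator {-1..1} x) \<and>
           char \<mu> t = exp (CLINT x|m. iexp (t * x) - 1 - \<i> * complex_of_real (t * x) * indicator {-1..1} x)))"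

definition image_measure_nz :: "'u measure \<Rightarrow> ('u \<Rightarrow> real) \<Rightarrow> real measure" where
  "image_measure_nz lam f = density (distr lam borel f) (indicator (- {0}))"

text \<open>Poisson random measure on the probability space P, with values in measures on the
  measurable space of nu, with intensity nu.  Poisson with parameter infinity means
  almost surely infinite.\<close>
definition poisson_random_measure :: "'w measure \<Rightarrow> ('w \<Rightarrow> 'a measure) \<Rightarrow> 'a measure \<Rightarrow> bool" where
  "poisson_random_measure P N \<nu> \<longleftrightarrow>
     (\<forall>\<omega>\<in>space P. sets (N \<omega>) = sets \<nu>) \<and>
     (\<forall>A\<in>sets \<nu>. (\<lambda>\<omega>. emeasure (N \<omega>) A) \<in> borel_measurable P) \<and>
     (\<forall>\<omega>\<in>space P. \<forall>A\<in>sets \<nu>. emeasure (N \<omega>) A \<in> range of_nat \<union> {\<infinity>}) \<and>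
     (\<forall>A\<in>sets \<nu>.
        (emeasure \<nu> A < \<infinity> \<longrightarrow>
           (AE \<omega> in P. emeasure (N \<omega>) A < \<infinity>) \<and>
           (\<forall>k::nat. measure P {\<omega>\<in>space P. emeasure (N \<omega>) A = of_nat k} =
               exp (- enn2real (emeasure \<nu> A)) * enn2real (emeasure \<nu> A) ^ k / fact k)) \<and>
        (emeasure \<nu> A = \<infinity> \<longrightarrow> (AE \<omega> in P. emeasure (N \<omega>) A = \<infinity>))) \<and>
     (\<forall>(I::nat set) A. finite I \<longrightarrow> disjoint_family_on A I \<longrightarrow> A ` I \<subseteq> sets \<nu> \<longrightarrow>
        prob_space.indep_vars P (\<lambda>_. borel) (\<lambda>i \<omega>. emeasure (N \<omega>) (A i)) I)"

end

theory Submission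
  imports Defs
begin


lemma cos_lb:
  fixes x :: real assumes "\<bar>x\<bar> \<le> 1" shows "x^2 / 4 \<le> 1 - cos x"
proof -
  have 1: "cmod (iexp x - (\<Sum>k \<le> 3. (\<i> * x)^k / fact k)) \<le> \<bar>x\<bar>^(Suc 3) / fact (Suc 3)"
    by (rule iexp_approx1)
  have 2: "Re (iexp x - (\<Sum>k \<le> 3. (\<i> * x)^k / fact k)) = cos x - 1 + x^2/2"
    by (simp add: numeral_3_eq_3 Re_exp power2_eq_square Re_divide)
  have 3: "\<bar>x\<bar>^(Suc 3) / fact (Suc 3) = \<bar>x\<bar>^4 / 24"
    by (simp add: numeral_3_eq_3 fact_numeral power4_eq_xxxx mult.assoc[symmetric])
  have "\<bar>cos x - 1 + x^2/2\<bar> \<le> \<bar>x\<bar>^4 / 24"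
    using abs_Re_le_cmod[of "iexp x - (\<Sum>k \<le> 3. (\<i> * x)^k / fact k)"] 1 2 3 by linarith
  moreover have "\<bar>x\<bar>^4 \<le> x^2"
  proof -
    have "\<bar>x\<bar>^4 = x^2 * x^2" by (simp add: power2_eq_square power4_eq_xxxx)
    also have "\<dots> \<le> x^2 * 1" using assms by (intro mult_left_mono) (auto simp: abs_square_le_1)
    finally show ?thesis by simp
  qed
  ultimately show ?thesis by linarith
qed

definition dyI :: "nat \<Rightarrow> real set" where
  "dyI n = {x. (1/2)^(Suc n) < x^2 \<and> x^2 \<le> (1/2)^n}"

lemma dyI_unique: assumes "x \<in> dyI m" "x \<in> dyI n" shows "m = n"
proof -
  have le: "m \<le> n" if "x \<in> dyI m" "x \<in> dyI n" for m n
  proof (rule ccontr)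
    assume "\<not> m \<le> n"
    then have "Suc n \<le> m" by simp
    then have "(1/2::real)^m \<le> (1/2)^(Suc n)" by (intro power_decreasing) auto
    with that show False by (auto simp: dyI_def)
  qed
  show ?thesis using le[OF assms] le[OF assms(2,1)] by simp
qed

lemma dyI_sum: assumes "x \<in> dyI m"
  shows "(\<Sum>n. ennreal ((1/2)^n) * indicator (dyI n) x) = ennreal ((1/2)^m)"
proof -
  have "(\<Sum>n. ennreal ((1/2)^n) * indicator (dyI n) x) = (\<Sum>n\<in>{m}. ennreal ((1/2)^n) * indicator (dyI n) x)"
    by (rule suminf_finite) (use dyI_unique assms in \<open>auto simp: indicator_def\<close>)
  then show ?thesis using assms by simp
qed

lemma dyI_sum0: assumes "\<forall>m. x \<notin> dyI m"
  shows "(\<Sum>n. ennreal ((1/2)^n) * indicator (dyI n) x) = 0"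
  using assms by simp

lemma dyI_exists: fixes y :: real assumes "0 < y" "y \<le> 1"
  shows "\<exists>n. (1/2)^(Suc n) < y \<and> y \<le> (1/2)^n"
proof -
  obtain k where k: "(1/2::real)^k < y" using real_arch_pow_inv[OF assms(1), of "1/2"] by auto
  define n0 where "n0 = (LEAST k. (1/2::real)^k < y)"
  have n0: "(1/2::real)^n0 < y" unfolding n0_def by (rule LeastI[of _ k]) (rule k)
  have "n0 \<noteq> 0"
  proof
    assume "n0 = 0" then show False using n0 assms by simp
  qed
  then obtain n where n: "n0 = Suc n" by (cases n0) auto
  have "n < n0" using n by simp
  then have "\<not> (1/2::real)^n < y" unfolding n0_def by (rule not_less_Least)
  then show ?thesis using n n0 by (intro exI[of _ n]) auto
qed

lemma dyI_upper: fixes x :: real assumes "x^2 \<le> 1"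
  shows "ennreal (x^2) \<le> (\<Sum>n. ennreal ((1/2)^n) * indicator (dyI n) x)"
proof (cases "x = 0")
  case True then show ?thesis by simp
next
  case False
  then have "0 < x^2" by simp
  from dyI_exists[OF this assms] obtain m where "x \<in> dyI m" by (auto simp: dyI_def)
  then show ?thesis using dyI_sum[of x m] by (simp add: dyI_def)
qed

lemma dyI_lower: fixes x :: real
  shows "(\<Sum>n. ennreal ((1/2)^n) * indicator (dyI n) x) \<le> ennreal (8 * (1 - cos x))"
proof (cases "\<exists>m. x \<in> dyI m")
  case True
  then obtain m where m: "x \<in> dyI m" by auto
  then have a: "(1/2::real)^m < 2 * x^2" and b: "x^2 \<le> 1"
    by (auto simp: dyI_def intro: order_trans[OF _ power_le_one])
  from b have "\<bar>x\<bar> \<le> 1" by (simp add: abs_square_le_1)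
  from cos_lb[OF this] have "x^2 \<le> 4 * (1 - cos x)" by simp
  with a have "(1/2::real)^m \<le> 8 * (1 - cos x)" by linarith
  then show ?thesis using dyI_sum[OF m] by (simp add: ennreal_leI)
next
  case False then show ?thesis by simp
qed



lemma poisson_sums: fixes a :: real
  shows "(\<lambda>k. real k * (exp (-a) * a^k / fact k)) sums a"
proof -
  have e: "(\<lambda>k. a^k / fact k) sums exp a"
    using exp_converges[of a] by (simp add: divide_inverse mult.commute)
  have "(\<lambda>k. exp (-a) * a * (a^k / fact k)) sums (exp (-a) * a * exp a)"
    by (rule sums_mult[OF e])
  moreover have "exp (-a) * a * exp a = a" by (simp add: exp_minus field_simps)
  ultimately have h: "(\<lambda>k. exp (-a) * a * (a^k / fact k)) sums a" by simp
  have "(\<lambda>k. real (Suc k) * (exp (-a) * a^(Suc k) / fact (Suc k))) = (\<lambda>k. exp (-a) * a * (a^k / fact k))"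
  proof (rule ext)
    fix k
    have "real (Suc k) * (exp (-a) * a^(Suc k) / fact (Suc k)) = real (Suc k) * (exp (-a) * a * a^k) / (real (Suc k) * fact k)"
      by (simp only: fact_Suc power_Suc) (simp add: mult.assoc)
    also have "\<dots> = exp (-a) * a * (a^k / fact k)"
      by (simp del: of_nat_Suc)
    finally show "real (Suc k) * (exp (-a) * a^(Suc k) / fact (Suc k)) = exp (-a) * a * (a^k / fact k)" .
  qed
  with h have "(\<lambda>k. real (Suc k) * (exp (-a) * a^(Suc k) / fact (Suc k))) sums a" by simp
  then have "(\<lambda>k. real k * (exp (-a) * a^k / fact k)) sums (a + 0)"
    by (subst (asm) sums_Suc_iff) simp
  then show ?thesis by simp
qed

lemma poisson_mean:
  fixes X :: "'w \<Rightarrow> ennreal"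
  assumes P: "prob_space P" and X: "X \<in> borel_measurable P" and fin: "AE \<omega> in P. X \<omega> < \<infinity>"
   and rng: "\<forall>\<omega>\<in>space P. X \<omega> \<in> range of_nat \<union> {\<infinity>}"
   and pr: "\<forall>k::nat. measure P {\<omega>\<in>space P. X \<omega> = of_nat k} = exp (-a) * a^k / fact k"
   and a: "0 \<le> a"
  shows "(\<integral>\<^sup>+\<omega>. X \<omega> \<partial>P) = ennreal a"
proof -
  interpret prob_space P by (rule P)
  define S where "S k = {\<omega>\<in>space P. X \<omega> = of_nat k}" for k :: nat
  have S_sets: "S k \<in> sets P" for k unfolding S_def using X by measurable
  have ae: "AE \<omega> in P. X \<omega> = (\<Sum>k. of_nat k * indicator (S k) \<omega>)"
    using fin AE_space
  proof eventually_elim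
    case (elim \<omega>)
    show ?case
    proof -
      from rng elim obtain j where j: "X \<omega> = of_nat j" by auto
      have "(\<Sum>k. (of_nat k :: ennreal) * indicator (S k) \<omega>) = (\<Sum>k\<in>{j}. of_nat k * indicator (S k) \<omega>)"
        by (rule suminf_finite) (auto simp: S_def j indicator_def)
      then show ?thesis using elim j by (simp add: S_def)
    qed
  qed
  have "(\<integral>\<^sup>+\<omega>. X \<omega> \<partial>P) = (\<integral>\<^sup>+\<omega>. (\<Sum>k. of_nat k * indicator (S k) \<omega>) \<partial>P)"
    by (rule nn_integral_cong_AE[OF ae])
  also have "\<dots> = (\<Sum>k. \<integral>\<^sup>+\<omega>. of_nat k * indicator (S k) \<omega> \<partial>P)"
    by (rule nn_integral_suminf) (use S_sets in measurable)
  also have "\<dots> = (\<Sum>k. ennreal (real k * (exp (-a) * a^k / fact k)))"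
  proof (rule suminf_cong)
    fix k
    have "(\<integral>\<^sup>+\<omega>. of_nat k * indicator (S k) \<omega> \<partial>P) = of_nat k * emeasure P (S k)"
      by (rule nn_integral_cmult_indicator[OF S_sets])
    also have "\<dots> = ennreal (real k) * ennreal (exp (-a) * a^k / fact k)"
      using pr by (simp add: emeasure_eq_measure S_def ennreal_of_nat_eq_real_of_nat)
    also have "\<dots> = ennreal (real k * (exp (-a) * a^k / fact k))"
      by (rule ennreal_mult[symmetric]) (use a in auto)
    finally show "(\<integral>\<^sup>+\<omega>. of_nat k * indicator (S k) \<omega> \<partial>P) = ennreal (real k * (exp (-a) * a^k / fact k))" .
  qed
  also have "\<dots> = ennreal (\<Sum>k. real k * (exp (-a) * a^k / fact k))"
    by (rule suminf_ennreal2) (use a poisson_sums[of a] in \<open>auto simp: sums_iff\<close>)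
  also have "\<dots> = ennreal a" using poisson_sums[of a] by (simp add: sums_iff)
  finally show ?thesis .
qed


theorem lemma4p2:
  fixes P :: "'w measure"
    and lam :: "'u::{banach, second_countable_topology} measure"
    and N :: "'w \<Rightarrow> (real \<times> 'u) measure"
  assumes "prob_space P"
    and "sets lam = sets borel"
    and "sigma_finite_measure lam"
    and "emeasure lam {0} = 0"
    and "poisson_random_measure P N (restrict_space lborel {0<..} \<Otimes>\<^sub>M lam)"
    and "\<forall>f::'u \<Rightarrow> real. bounded_linear f \<longrightarrow> levy_measure_real (image_measure_nz lam f)"
  shows "\<forall>f::'u \<Rightarrow> real. bounded_linear f \<longrightarrow>
           (AE \<omega> in P. (\<integral>\<^sup>+ x. indicator ({0<..1} \<times> cball 0 1) x * ennreal ((f (snd x))\<^sup>2) \<partial>N \<omega>) < \<infinity>)"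
proof (intro allI impI)
  fix f :: "'u \<Rightarrow> real" assume f: "bounded_linear f"
  interpret P: prob_space P by fact
  define K where "K = onorm f + 1"
  have K: "0 < K" using onorm_pos_le[OF f] by (simp add: K_def)
  define F where "F u = f u / K" for u
  have F: "bounded_linear F" unfolding F_def
    using bounded_linear_compose[OF bounded_linear_divide[of K] f] by (simp add: o_def)
  have Fb: "(F u)^2 \<le> 1" if "norm u \<le> 1" for u
  proof -
    have "\<bar>f u\<bar> \<le> onorm f * norm u" using onorm[OF f, of u] by simp
    also have "\<dots> \<le> onorm f * 1" using that onorm_pos_le[OF f] by (intro mult_left_mono) auto
    finally have "\<bar>f u\<bar> \<le> K" by (simp add: K_def)
    then have "\<bar>f u\<bar> / K \<le> 1" using K by simp
    then have "\<bar>F u\<bar> \<le> 1" using K by (simp add: F_def abs_divide)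
    then show ?thesis by (simp add: abs_square_le_1)
  qed
  have space_lam: "space lam = UNIV" using sets_eq_imp_space_eq[OF assms(2)] by simp
  have Fm: "F \<in> borel_measurable lam"
    using borel_measurable_continuous_onI[OF linear_continuous_on[OF F]]
    by (simp add: measurable_cong_sets[OF assms(2) refl])
  define m where "m = image_measure_nz lam F"
  have "levy_measure_real m" using assms(6) F by (simp add: m_def)
  then have int: "integrable m (\<lambda>x. iexp (1 * x) - 1 - \<i> * complex_of_real (1 * x) * indicator {-1..1} x)"
    and sets_m: "sets m = sets borel" unfolding levy_measure_real_def by blast+
  have "integrable m (\<lambda>x. Re (iexp (1 * x) - 1 - \<i> * complex_of_real (1 * x) * indicator {-1..1} x))"
    using int by (rule integrable_Re)
  moreover have Imi: "Im (indicator {-1..1} x :: complex) = 0" for x by (simp add: indicator_def)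
  ultimately have "integrable m (\<lambda>x. cos x - 1)" by (simp add: Re_exp Imi)
  then have "(\<integral>\<^sup>+x. ennreal (norm (cos x - 1)) \<partial>m) < \<infinity>" by (simp add: integrable_iff_bounded)
  moreover have nc: "norm (cos x - 1) = 1 - cos x" for x :: real using cos_le_one[of x] by simp
  ultimately have cosfin: "(\<integral>\<^sup>+x. ennreal (1 - cos x) \<partial>m) < \<infinity>" by (simp only: nc)
  have dyI_sets: "dyI n \<in> sets borel" for n unfolding dyI_def by measurable
  have S_fin: "(\<Sum>n. ennreal ((1/2)^n) * emeasure m (dyI n)) < \<infinity>"
  proof -
    have "(\<Sum>n. ennreal ((1/2)^n) * emeasure m (dyI n)) = (\<Sum>n. \<integral>\<^sup>+x. ennreal ((1/2)^n) * indicator (dyI n) x \<partial>m)"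
      using dyI_sets sets_m by (simp add: nn_integral_cmult_indicator)
    also have "\<dots> = (\<integral>\<^sup>+x. (\<Sum>n. ennreal ((1/2)^n) * indicator (dyI n) x) \<partial>m)"
      by (rule nn_integral_suminf[symmetric]) (use dyI_sets sets_m in measurable)
    also have "\<dots> \<le> (\<integral>\<^sup>+x. ennreal 8 * ennreal (1 - cos x) \<partial>m)"
    proof (rule nn_integral_mono)
      fix x :: real
      have eq: "ennreal 8 * ennreal (1 - cos x) = ennreal (8 * (1 - cos x))"
        by (rule ennreal_mult[symmetric]) auto
      show "(\<Sum>n. ennreal ((1/2)^n) * indicator (dyI n) x) \<le> ennreal 8 * ennreal (1 - cos x)"
        unfolding eq by (rule dyI_lower)
    qed
    also have "\<dots> = ennreal 8 * (\<integral>\<^sup>+x. ennreal (1 - cos x) \<partial>m)"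
      by (rule nn_integral_cmult) (simp add: measurable_cong_sets[OF sets_m refl])
    also have "\<dots> < \<infinity>" using cosfin by (simp add: ennreal_mult_less_top)
    finally show ?thesis .
  qed
  show "AE \<omega> in P. (\<integral>\<^sup>+ x. indicator ({0<..1} \<times> cball 0 1) x * ennreal ((f (snd x))\<^sup>2) \<partial>N \<omega>) < \<infinity>"
  proof -
    define \<nu> where "\<nu> = restrict_space (lborel :: real measure) {0<..} \<Otimes>\<^sub>M lam"
    note prm = assms(5)[unfolded poisson_random_measure_def, folded \<nu>_def]
    have sets_N: "\<And>\<omega>. \<omega> \<in> space P \<Longrightarrow> sets (N \<omega>) = sets \<nu>"
      and Nmeas: "\<And>A. A \<in> sets \<nu> \<Longrightarrow> (\<lambda>\<omega>. emeasure (N \<omega>) A) \<in> borel_measurable P"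
      and Nrng: "\<And>A. A \<in> sets \<nu> \<Longrightarrow> \<forall>\<omega>\<in>space P. emeasure (N \<omega>) A \<in> range of_nat \<union> {\<infinity>}"
      and Npois: "\<And>A. A \<in> sets \<nu> \<Longrightarrow> emeasure \<nu> A < \<infinity> \<Longrightarrow>
           (AE \<omega> in P. emeasure (N \<omega>) A < \<infinity>) \<and>
           (\<forall>k::nat. measure P {\<omega>\<in>space P. emeasure (N \<omega>) A = of_nat k} =
               exp (- enn2real (emeasure \<nu> A)) * enn2real (emeasure \<nu> A) ^ k / fact k)"
      using prm by blast+
    define B where "B n = F -` dyI n" for n
    have B_sets: "B n \<in> sets lam" for n
      using measurable_sets[OF Fm dyI_sets[of n]] by (simp add: B_def space_lam)
    have mB: "emeasure m (dyI n) = emeasure lam (B n)" for n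
    proof -
      have "emeasure m (dyI n) = (\<integral>\<^sup>+x. indicator (- {0}) x * indicator (dyI n) x \<partial>distr lam borel F)"
        unfolding m_def image_measure_nz_def
        by (rule emeasure_density) (use dyI_sets in auto)
      also have "\<dots> = (\<integral>\<^sup>+x. indicator (dyI n) x \<partial>distr lam borel F)"
        by (rule nn_integral_cong) (auto simp: indicator_def dyI_def)
      also have "\<dots> = emeasure (distr lam borel F) (dyI n)"
        by (rule nn_integral_indicator) (use dyI_sets in simp)
      also have "\<dots> = emeasure lam (B n)"
        by (subst emeasure_distr[OF Fm dyI_sets]) (simp add: B_def space_lam)
      finally show ?thesis .
    qed
    define A where "A n = {0<..1::real} \<times> B n" for n
    have Ioc_sets: "{0<..1::real} \<in> sets (restrict_space lborel {0<..})"
      by (subst sets_restrict_space_iff) auto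
    have A_sets: "A n \<in> sets \<nu>" for n
      unfolding A_def \<nu>_def using Ioc_sets B_sets by (rule pair_measureI)
    have \<nu>A: "emeasure \<nu> (A n) = emeasure m (dyI n)" for n
    proof -
      have "emeasure \<nu> (A n) = emeasure (restrict_space lborel {0<..}) {0<..1::real} * emeasure lam (B n)"
        unfolding \<nu>_def A_def
        by (rule sigma_finite_measure.emeasure_pair_measure_Times[OF assms(3) Ioc_sets B_sets])
      also have "emeasure (restrict_space lborel {0<..}) {0<..1::real} = 1"
        by (subst emeasure_restrict_space) auto
      finally show ?thesis using mB by simp
    qed
    have \<nu>A_fin: "emeasure \<nu> (A n) < \<infinity>" for n
    proof -
      have "ennreal ((1/2)^n) * emeasure m (dyI n) < \<infinity>" using S_fin by (rule ennreal_suminf_lessD)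
      then show ?thesis by (auto simp: \<nu>A ennreal_mult_less_top)
    qed
    have EN: "(\<integral>\<^sup>+\<omega>. emeasure (N \<omega>) (A n) \<partial>P) = emeasure \<nu> (A n)" for n
    proof -
      have "(\<integral>\<^sup>+\<omega>. emeasure (N \<omega>) (A n) \<partial>P) = ennreal (enn2real (emeasure \<nu> (A n)))"
        using Npois[OF A_sets \<nu>A_fin]
        by (intro poisson_mean[OF assms(1) Nmeas[OF A_sets]] Nrng[OF A_sets]) auto
      then show ?thesis using \<nu>A_fin[of n] by simp
    qed
    define G where "G \<omega> = (\<Sum>n. ennreal (K^2 * (1/2)^n) * emeasure (N \<omega>) (A n))" for \<omega>
    have Gm: "G \<in> borel_measurable P" unfolding G_def
      using Nmeas[OF A_sets] by measurable
    have "(\<integral>\<^sup>+\<omega>. G \<omega> \<partial>P) = (\<Sum>n. \<integral>\<^sup>+\<omega>. ennreal (K^2 * (1/2)^n) * emeasure (N \<omega>) (A n) \<partial>P)"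
      unfolding G_def by (rule nn_integral_suminf) (use Nmeas[OF A_sets] in measurable)
    also have "\<dots> = (\<Sum>n. ennreal (K^2) * (ennreal ((1/2)^n) * emeasure m (dyI n)))"
      by (subst nn_integral_cmult) (use Nmeas[OF A_sets] in \<open>auto simp: EN \<nu>A ennreal_mult mult.assoc\<close>)
    also have "\<dots> = ennreal (K^2) * (\<Sum>n. ennreal ((1/2)^n) * emeasure m (dyI n))"
      by simp
    also have "\<dots> < \<infinity>" using S_fin by (simp add: ennreal_mult_less_top)
    finally have "(\<integral>\<^sup>+\<omega>. G \<omega> \<partial>P) \<noteq> \<infinity>" by simp
    from nn_integral_PInf_AE[OF Gm this] have aeG: "AE \<omega> in P. G \<omega> \<noteq> \<infinity>" .
    show ?thesis
      using aeG AE_space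
    proof eventually_elim
      case (elim \<omega>)
      have A_sets': "A n \<in> sets (N \<omega>)" for n using A_sets sets_N[OF elim(2)] by simp
      have "(\<integral>\<^sup>+ x. indicator ({0<..1} \<times> cball 0 1) x * ennreal ((f (snd x))\<^sup>2) \<partial>N \<omega>)
          \<le> (\<integral>\<^sup>+ x. (\<Sum>n. ennreal (K^2 * (1/2)^n) * indicator (A n) x) \<partial>N \<omega>)"
      proof (rule nn_integral_mono)
        fix x :: "real \<times> 'u"
        obtain s u where x: "x = (s, u)" by (cases x)
        show "indicator ({0<..1} \<times> cball 0 1) x * ennreal ((f (snd x))\<^sup>2)
            \<le> (\<Sum>n. ennreal (K^2 * (1/2)^n) * indicator (A n) x)"
        proof (cases "s \<in> {0<..1} \<and> u \<in> cball 0 1")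
          case True
          have fu: "(f u)^2 = K^2 * (F u)^2" using K by (simp add: F_def power_divide)
          have "indicator ({0<..1} \<times> cball 0 1) x * ennreal ((f (snd x))\<^sup>2) = ennreal (K^2) * ennreal ((F u)^2)"
            using True x fu by (simp add: ennreal_mult)
          also have "\<dots> \<le> ennreal (K^2) * (\<Sum>n. ennreal ((1/2)^n) * indicator (dyI n) (F u))"
            using True by (intro mult_left_mono dyI_upper Fb) auto
          also have "\<dots> = (\<Sum>n. ennreal (K^2 * (1/2)^n) * indicator (A n) x)"
            using True x
            by (simp add: ennreal_mult mult.assoc A_def B_def indicator_def)
          finally show ?thesis .
        next
          case False
          then show ?thesis using x by simp
        qed
      qed
      also have "\<dots> = (\<Sum>n. \<integral>\<^sup>+ x. ennreal (K^2 * (1/2)^n) * indicator (A n) x \<partial>N \<omega>)"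
        by (rule nn_integral_suminf) (use A_sets' in measurable)
      also have "\<dots> = G \<omega>"
        unfolding G_def using A_sets' by (simp add: nn_integral_cmult_indicator)
      also have "\<dots> < \<infinity>" using elim(1) by (simp add: top.not_eq_extremum)
      finally show ?case .
    qed
  qed
qed

end
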